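(* For $n = 2^i$ with $i \ge 2$, let $W(V)$ be the word on an ordered $n$-element nail set $V$ defined below. Then $W(V)$ solves the $2$-out-of-$n$ picture-hanging puzzle on $V$, and its formal (unreduced) length is \[ \lambda(W(V)) = \tfrac{8}{3}\, n^{\log_2 6} - 4 n^2 = \tfrac{8}{3}\cdot 6^i - 4\cdot 4^i ; \] in particular the freely reduced length of this solution is at most $\tfrac{8}{3} n^{\log_2 6} - 4n^2$. Definitions: For an ordered nail set $U$ with $|U| = 2^t$, the balanced commutator tree $B(U)$ is the generator if $|U|=1$, and otherwise $B(U) = [B(U_1), B(U_2)]$ with $U_1$ the first half and $U_2$ the second half of $U$. For an ordered nail set $U$ of size $2^t$, $t \ge 1$: if $U = \{a,b\}$ (in this order) then $W(U) = a + b$; if $|U| \ge 4$, let $L$ be the first half and $R$ the second half of $U$, let $P = W(L)$, $Q = W(R)$, $C = B(L) + B(R)$, let $X$ be one of $P, Q, C$ of maximal formal length $\lambda$, let $Y, Z$ be the other two (in either order), and set $W(U) = [X, [Y, Z]]$.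
   Context: Words are elements of the free group on the nails, written additively ($+$ group operation, $-$ inverse, $0$ identity); $[a,b] = a + b - a - b$. The formal length $\lambda$ of an expression is its symbol count before any free reduction: $\lambda(\text{generator}) = 1$, $\lambda(x + y) = \lambda(x) + \lambda(y)$, $\lambda([x,y]) = 2\lambda(x) + 2\lambda(y)$. The (reduced) length of a word is the number of letters of its freely reduced form. For $S \subseteq V$, $w|_S$ is the image of $w$ under the homomorphism killing the generators in $S$. A solution to the $k$-out-of-$n$ picture-hanging puzzle on a set $V$ of $n$ nails is a word $w$ with $w|_S = 0 \iff |S| \ge k$ for all $S \subseteq V$ (equivalently for $k\ge1$: $w \ne 0$, removing any $k$ nails gives $0$, removing fewer leaves it nonzero). *)

theory Defs
  imports Complex_Main "HOL-Library.Multiset"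
begin

text \<open>A letter is a nail together with a flag; (x, False) is the generator x,
  (x, True) its inverse.\<close>
type_synonym 'a letter = "'a \<times> bool"

fun inv_letter :: "'a letter \<Rightarrow> 'a letter" where
  "inv_letter (x, b) = (x, \<not> b)"

definition inv_word :: "'a letter list \<Rightarrow> 'a letter list" where
  "inv_word w = rev (map inv_letter w)"

fun red :: "'a letter list \<Rightarrow> 'a letter list" where
  "red [] = []"
| "red (x # xs) = (case red xs of
      [] \<Rightarrow> [x]
    | y # ys \<Rightarrow> (if y = inv_letter x then ys else x # y # ys))"

text \<open>Image under the homomorphism killing the generators in S (before reduction).\<close>
definition kill :: "'a set \<Rightarrow> 'a letter list \<Rightarrow> 'a letter list" where
  "kill S w = filter (\<lambda>l. fst l \<notin> S) w"

definition solves :: "nat \<Rightarrow> 'a set \<Rightarrow> 'a letter list \<Rightarrow> bool" where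
  "solves k V w \<longleftrightarrow> (\<forall>S. S \<subseteq> V \<longrightarrow> (red (kill S w) = [] \<longleftrightarrow> card S \<ge> k))"

datatype 'a fexpr = Gen 'a | Add "'a fexpr" "'a fexpr" | Comm "'a fexpr" "'a fexpr"

fun word :: "'a fexpr \<Rightarrow> 'a letter list" where
  "word (Gen a) = [(a, False)]"
| "word (Add x y) = word x @ word y"
| "word (Comm x y) = word x @ word y @ inv_word (word x) @ inv_word (word y)"

fun flen :: "'a fexpr \<Rightarrow> nat" where
  "flen (Gen a) = 1"
| "flen (Add x y) = flen x + flen y"
| "flen (Comm x y) = 2 * flen x + 2 * flen y"

function btree :: "'a list \<Rightarrow> 'a fexpr" where
  "btree U = (if length U \<le> 1 then Gen (hd U)
     else Comm (btree (take (length U div 2) U)) (btree (drop (length U div 2) U)))"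
  by pat_completeness auto
termination by (relation "measure length") auto

text \<open>The construction W(U); the choice of X among P, Q, C of maximal formal
  length and the order of Y, Z are arbitrary, so W is a relation.\<close>
inductive isW :: "'a list \<Rightarrow> 'a fexpr \<Rightarrow> bool" where
  base: "isW [a, b] (Add (Gen a) (Gen b))"
| step: "\<lbrakk> length U \<ge> 4;
           L = take (length U div 2) U; R = drop (length U div 2) U;
           isW L P; isW R Q; C = Add (btree L) (btree R);
           mset [X, Y, Z] = mset [P, Q, C];
           flen P \<le> flen X; flen Q \<le> flen X; flen C \<le> flen X \<rbrakk>
         \<Longrightarrow> isW U (Comm X (Comm Y Z))"

end

theory Submission
  imports Defs
begin
declare btree.simps[simp del]

section \<open>Free reduction algebra\<close>

lemma inv_inv_letter[simp]: "inv_letter (inv_letter l) = l" by (cases l) auto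
lemma fst_inv_letter[simp]: "fst (inv_letter l) = fst l" by (cases l) auto

fun reduced :: "'a letter list \<Rightarrow> bool" where
  "reduced [] = True"
| "reduced [x] = True"
| "reduced (x # y # ys) = (y \<noteq> inv_letter x \<and> reduced (y # ys))"

lemma reduced_tl: "reduced (x # xs) \<Longrightarrow> reduced xs"
  by (cases xs) auto

lemma reduced_red: "reduced (red xs)"
proof (induction xs)
  case Nil then show ?case by simp
next
  case (Cons x xs)
  then show ?case
    by (cases "red xs") (auto dest: reduced_tl)
qed

lemma red_reduced: "reduced xs \<Longrightarrow> red xs = xs"
proof (induction xs)
  case Nil then show ?case by simp
next
  case (Cons x xs)
  then show ?case
    by (cases xs) (auto dest: reduced_tl)
qed

lemma red_red[simp]: "red (red xs) = red xs"
  by (rule red_reduced[OF reduced_red])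

lemma red_Cons_eq: "red xs = r \<Longrightarrow> red (x # xs) = (case r of [] \<Rightarrow> [x] | y # ys \<Rightarrow> (if y = inv_letter x then ys else x # y # ys))"
  by simp

declare red.simps(2)[simp del]

lemma red_cons_red: "red (x # red xs) = red (x # xs)"
  using red_Cons_eq[OF red_red[of xs], where x=x] red_Cons_eq[OF refl[of "red xs"], where x=x] by simp

lemma red_append_red2: "red (a @ red b) = red (a @ b)"
proof (induction a)
  case Nil then show ?case by simp
next
  case (Cons x a)
  have "red ((x # a) @ red b) = red (x # red (a @ red b))" by (simp only: red_cons_red append_Cons)
  also have "\<dots> = red (x # red (a @ b))" using Cons by simp
  also have "\<dots> = red ((x # a) @ b)" by (simp only: red_cons_red append_Cons)
  finally show ?case .
qed

lemma red_cancel: "red (x # inv_letter x # z) = red z"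
proof -
  have "red (x # inv_letter x # z) = red (x # red (inv_letter x # red z))"
    by (simp only: red_cons_red)
  also have "\<dots> = red z"
  proof (cases "red z")
    case Nil
    have "red (inv_letter x # red z) = [inv_letter x]" using red_Cons_eq[OF red_red[of z], where x="inv_letter x"] Nil by simp
    then show ?thesis using red_Cons_eq[where xs="[inv_letter x]" and r="[inv_letter x]" and x=x] Nil
      by (simp add: red_reduced)
  next
    case (Cons y ys)
    have r: "reduced (red z)" by (rule reduced_red)
    show ?thesis
    proof (cases "y = x")
      case True
      have h: "red (x # ys) = x # ys" using r Cons True by (simp add: red_reduced)
      have h1: "red (inv_letter x # red z) = ys" using red_Cons_eq[OF h, where x="inv_letter x"] Cons True by simp
      show ?thesis using h h1 Cons True by simp
    next
      case False
      have "reduced (inv_letter x # y # ys)" using r Cons False by auto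
      then have h: "red (inv_letter x # red z) = inv_letter x # red z" using Cons by (simp add: red_reduced)
      show ?thesis using h red_Cons_eq[OF h, where x=x] by simp
    qed
  qed
  finally show ?thesis .
qed

lemma red_append_red1: "red (red a @ b) = red (a @ b)"
proof (induction a)
  case Nil then show ?case by simp
next
  case (Cons x a)
  have "red ((x # a) @ b) = red (x # red (a @ b))" by (simp only: red_cons_red append_Cons)
  also have "\<dots> = red (x # red (red a @ b))" using Cons by simp
  also have "\<dots> = red (x # (red a @ b))" by (simp only: red_cons_red)
  finally have e: "red ((x # a) @ b) = red (x # (red a @ b))" .
  show ?case
  proof (cases "red a")
    case Nil
    have "red (x # a) = [x]" using red_Cons_eq[OF Nil, where x=x] by simp
    then show ?thesis using e Nil by simp
  next
    case (Cons y ys)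
    show ?thesis
    proof (cases "y = inv_letter x")
      case True
      have "red (x # a) = ys" using red_Cons_eq[OF Cons, where x=x] True by simp
      moreover have "red (x # (red a @ b)) = red (ys @ b)" using Cons True red_cancel[of x "ys @ b"] by simp
      ultimately show ?thesis using e by simp
    next
      case False
      have "red (x # a) = x # red a" using red_Cons_eq[OF Cons, where x=x] False Cons by simp
      then show ?thesis using e by simp
    qed
  qed
qed

lemma red_triv_mid: "red a = [] \<Longrightarrow> red (u @ a @ v) = red (u @ v)"
proof -
  assume a: "red a = []"
  have "red (u @ a @ v) = red (u @ red (a @ v))" by (simp only: red_append_red2)
  also have "\<dots> = red (u @ red (red a @ v))" by (simp only: red_append_red1)
  also have "\<dots> = red (u @ v)" using a by (simp add: red_append_red2)
  finally show ?thesis .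
qed

lemma inv_word_Cons: "inv_word (x # w) = inv_word w @ [inv_letter x]"
  by (simp add: inv_word_def)
lemma inv_word_append: "inv_word (a @ b) = inv_word b @ inv_word a"
  by (simp add: inv_word_def)
lemma inv_word_inv_word[simp]: "inv_word (inv_word w) = w"
  by (simp add: inv_word_def rev_map comp_def)
lemma inv_word_Nil[simp]: "inv_word [] = []" by (simp add: inv_word_def)
lemma length_inv_word[simp]: "length (inv_word w) = length w" by (simp add: inv_word_def)

lemma red_inv_self: "red (inv_word w @ w) = []"
proof (induction w)
  case Nil then show ?case by simp
next
  case (Cons x w)
  have "inv_word (x # w) @ x # w = inv_word w @ (inv_letter x # inv_letter (inv_letter x) # w)"
    by (simp add: inv_word_Cons)
  then have "red (inv_word (x # w) @ x # w) = red (inv_word w @ red (inv_letter x # inv_letter (inv_letter x) # w))"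
    by (simp only: red_append_red2)
  also have "\<dots> = red (inv_word w @ w)" by (simp only: red_cancel red_append_red2)
  finally show ?case using Cons by simp
qed

lemma red_self_inv: "red (w @ inv_word w) = []"
  using red_inv_self[of "inv_word w"] by simp

lemma red_inv_triv: "red a = [] \<Longrightarrow> red (inv_word a) = []"
proof -
  assume a: "red a = []"
  have "red (inv_word a) = red (inv_word a @ red a)" using a by simp
  also have "\<dots> = []" by (simp add: red_append_red2 red_inv_self)
  finally show ?thesis .
qed

lemma length_red: "length (red w) \<le> length w"
proof (induction w)
  case Nil then show ?case by simp
next
  case (Cons x w) then show ?case by (cases "red w") (auto simp: red.simps(2))
qed

lemma kill_append[simp]: "kill S (a @ b) = kill S a @ kill S b" by (simp add: kill_def)
lemma kill_inv[simp]: "kill S (inv_word a) = inv_word (kill S a)"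
  by (induction a) (auto simp: kill_def inv_word_def)

definition triv :: "'a set \<Rightarrow> 'a fexpr \<Rightarrow> bool" where
  "triv S e \<longleftrightarrow> red (kill S (word e)) = []"

lemma triv_comm1: "triv S x \<Longrightarrow> triv S (Comm x y)"
proof -
  assume t: "triv S x"
  define a where "a = kill S (word x)"
  define b where "b = kill S (word y)"
  have ra: "red a = []" using t by (simp add: triv_def a_def)
  have ria: "red (inv_word a) = []" using ra by (rule red_inv_triv)
  have "red (a @ b @ inv_word a @ inv_word b) = red ([] @ b @ inv_word a @ inv_word b)"
    using red_triv_mid[OF ra, of "[]"] by simp
  also have "\<dots> = red (b @ inv_word a @ inv_word b)" by simp
  also have "\<dots> = red (b @ inv_word b)" by (rule red_triv_mid[OF ria])
  also have "\<dots> = []" by (rule red_self_inv)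
  finally show ?thesis by (simp add: triv_def a_def b_def)
qed

lemma triv_comm2: "triv S y \<Longrightarrow> triv S (Comm x y)"
proof -
  assume t: "triv S y"
  define a where "a = kill S (word x)"
  define b where "b = kill S (word y)"
  have rb: "red b = []" using t by (simp add: triv_def b_def)
  have rib: "red (inv_word b) = []" using rb by (rule red_inv_triv)
  have "red (a @ b @ inv_word a @ inv_word b) = red (a @ inv_word a @ inv_word b)"
    by (rule red_triv_mid[OF rb])
  also have "\<dots> = red ((a @ inv_word a) @ inv_word b @ [])" by simp
  also have "\<dots> = red ((a @ inv_word a) @ [])" by (rule red_triv_mid[OF rib])
  also have "\<dots> = []" using red_self_inv by simp
  finally show ?thesis by (simp add: triv_def a_def b_def)
qed

lemma triv_add: "triv S x \<Longrightarrow> triv S y \<Longrightarrow> triv S (Add x y)"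
proof -
  assume tx: "triv S x" and ty: "triv S y"
  have ra: "red (kill S (word x)) = []" and rb: "red (kill S (word y)) = []"
    using tx ty by (auto simp: triv_def)
  have "red (kill S (word x) @ kill S (word y)) = red ([] @ kill S (word x) @ kill S (word y) @ [])" by simp
  also have "\<dots> = red ([] @ kill S (word y) @ [])" by (rule red_triv_mid[OF ra])
  also have "\<dots> = red ([] @ [])" by (rule red_triv_mid[OF rb])
  finally show ?thesis by (simp add: triv_def)
qed

section \<open>Concrete permutations of {0..4}\<close>

definition perm5 :: "nat list \<Rightarrow> nat \<Rightarrow> nat" where
  "perm5 l i = (if i < 5 then l ! i else i)"
definition lmul :: "nat list \<Rightarrow> nat list \<Rightarrow> nat list" where
  "lmul a b = map ((!) a) b"
definition linv :: "nat list \<Rightarrow> nat list" where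
  "linv a = map (\<lambda>j. length (takeWhile (\<lambda>x. x \<noteq> j) a)) [0,1,2,3,4]"
definition valid :: "nat list \<Rightarrow> bool" where
  "valid a \<longleftrightarrow> length a = 5 \<and> list_all (\<lambda>x. x < 5) a"
definition isperm :: "nat list \<Rightarrow> bool" where
  "isperm a \<longleftrightarrow> valid a \<and> valid (linv a) \<and> lmul a (linv a) = [0,1,2,3,4] \<and> lmul (linv a) a = [0,1,2,3,4]"
definition lcomm :: "nat list \<Rightarrow> nat list \<Rightarrow> nat list" where
  "lcomm a b = lmul (lmul (lmul a b) (linv a)) (linv b)"
definition lconj :: "nat list \<Rightarrow> nat list \<Rightarrow> nat list" where
  "lconj h a = lmul (lmul h a) (linv h)"

lemmas conc_defs = isperm_def valid_def linv_def lmul_def lcomm_def lconj_def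

lemma valid_lmul: "valid a \<Longrightarrow> valid b \<Longrightarrow> valid (lmul a b)"
  unfolding valid_def lmul_def list_all_iff by auto

lemma perm5_lmul: "valid b \<Longrightarrow> perm5 (lmul a b) z = perm5 a (perm5 b z)"
  unfolding valid_def lmul_def list_all_iff perm5_def
  by (simp add: nth_mem)

lemma l5: "[0,1,2,3,4::nat] = [0..<5]" by (simp add: upt_rec)
lemma perm5_id: "a = [0,1,2,3,4] \<Longrightarrow> perm5 a z = z"
  by (simp only: l5) (simp add: perm5_def)

lemma isperm_valid: "isperm a \<Longrightarrow> valid a" and isperm_valid_inv: "isperm a \<Longrightarrow> valid (linv a)"
  by (auto simp: isperm_def)

lemma isperm_inv1: "isperm a \<Longrightarrow> perm5 a (perm5 (linv a) z) = z"
proof -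
  assume a: "isperm a"
  have v: "valid (linv a)" and e: "lmul a (linv a) = [0,1,2,3,4]" using a by (auto simp: isperm_def)
  have "perm5 a (perm5 (linv a) z) = perm5 (lmul a (linv a)) z" by (rule perm5_lmul[OF v, symmetric])
  also have "\<dots> = z" by (rule perm5_id[OF e])
  finally show ?thesis .
qed

lemma isperm_inv2: "isperm a \<Longrightarrow> perm5 (linv a) (perm5 a z) = z"
proof -
  assume a: "isperm a"
  have v: "valid a" and e: "lmul (linv a) a = [0,1,2,3,4]" using a by (auto simp: isperm_def)
  have "perm5 (linv a) (perm5 a z) = perm5 (lmul (linv a) a) z" by (rule perm5_lmul[OF v, symmetric])
  also have "\<dots> = z" by (rule perm5_id[OF e])
  finally show ?thesis .
qed

section \<open>Evaluation of words\<close>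

fun lval :: "('a \<Rightarrow> nat \<Rightarrow> nat) \<Rightarrow> ('a \<Rightarrow> nat \<Rightarrow> nat) \<Rightarrow> 'a letter \<Rightarrow> nat \<Rightarrow> nat" where
  "lval f g (x, b) = (if b then g x else f x)"

fun ev :: "('a \<Rightarrow> nat \<Rightarrow> nat) \<Rightarrow> ('a \<Rightarrow> nat \<Rightarrow> nat) \<Rightarrow> 'a letter list \<Rightarrow> nat \<Rightarrow> nat" where
  "ev f g [] = id"
| "ev f g (l # w) = lval f g l \<circ> ev f g w"

definition good :: "('a \<Rightarrow> nat \<Rightarrow> nat) \<Rightarrow> ('a \<Rightarrow> nat \<Rightarrow> nat) \<Rightarrow> bool" where
  "good f g \<longleftrightarrow> (\<forall>x z. f x (g x z) = z \<and> g x (f x z) = z)"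

lemma lval_inv1: "good f g \<Longrightarrow> lval f g l (lval f g (inv_letter l) z) = z"
  by (cases l) (auto simp: good_def)
lemma lval_inv2: "good f g \<Longrightarrow> lval f g (inv_letter l) (lval f g l z) = z"
  by (cases l) (auto simp: good_def)

lemma ev_append: "ev f g (a @ b) z = ev f g a (ev f g b z)"
  by (induction a arbitrary: z) auto

lemma ev_red: "good f g \<Longrightarrow> ev f g (red w) z = ev f g w z"
proof (induction w arbitrary: z)
  case Nil then show ?case by simp
next
  case (Cons x xs)
  show ?case
  proof (cases "red xs")
    case Nil
    then show ?thesis using Cons.IH[OF Cons.prems] red_Cons_eq[OF Nil, where x=x] by simp
  next
    case (Cons y ys)
    note IH = Cons.IH[OF Cons.prems]
    show ?thesis
    proof (cases "y = inv_letter x")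
      case True
      have "ev f g (x # xs) z = lval f g x (ev f g (red xs) z)" using IH by simp
      also have "\<dots> = ev f g ys z" using Cons True lval_inv1[OF Cons.prems] by simp
      finally show ?thesis using red_Cons_eq[OF Cons, where x=x] True by simp
    next
      case False
      show ?thesis using red_Cons_eq[OF Cons, where x=x] False IH Cons by simp
    qed
  qed
qed

lemma ev_inv1: "good f g \<Longrightarrow> ev f g (inv_word w) (ev f g w z) = z"
  by (induction w arbitrary: z) (auto simp: inv_word_Cons ev_append lval_inv2)
lemma ev_inv2: "good f g \<Longrightarrow> ev f g w (ev f g (inv_word w) z) = z"
  by (induction w arbitrary: z) (auto simp: inv_word_Cons ev_append lval_inv1)

lemma ev_cong: "(\<And>x. x \<in> fst ` set w \<Longrightarrow> f x = f' x \<and> g x = g' x) \<Longrightarrow> ev f g w = ev f' g' w"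
proof (induction w)
  case Nil then show ?case by simp
next
  case (Cons l w)
  then show ?case by (cases l) (auto simp: fun_eq_iff)
qed

lemma ev_kill: "(\<And>x. x \<in> S \<Longrightarrow> f x = id \<and> g x = id) \<Longrightarrow> ev f g (kill S w) = ev f g w"
proof (induction w)
  case Nil then show ?case by (simp add: kill_def)
next
  case (Cons l w)
  then show ?case by (cases l) (auto simp: fun_eq_iff kill_def)
qed

definition val :: "('a \<Rightarrow> nat \<Rightarrow> nat) \<Rightarrow> ('a \<Rightarrow> nat \<Rightarrow> nat) \<Rightarrow> 'a fexpr \<Rightarrow> nat list \<Rightarrow> bool" where
  "val f g e a \<longleftrightarrow> ev f g (word e) = perm5 a"

lemma val_inv: assumes "good f g" "val f g e a" "isperm a"
  shows "ev f g (inv_word (word e)) = perm5 (linv a)"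
proof
  fix z
  have "ev f g (inv_word (word e)) z = ev f g (inv_word (word e)) (perm5 a (perm5 (linv a) z))"
    using isperm_inv1[OF assms(3)] by simp
  also have "\<dots> = perm5 (linv a) z" using ev_inv1[OF assms(1), of "word e"] assms(2)
    by (simp add: val_def)
  finally show "ev f g (inv_word (word e)) z = perm5 (linv a) z" .
qed

lemma val_comm: assumes g: "good f g" and x: "val f g x a" and y: "val f g y b" and "isperm a" "isperm b"
  shows "val f g (Comm x y) (lcomm a b)"
proof -
  have ix: "ev f g (inv_word (word x)) = perm5 (linv a)" by (rule val_inv[OF g x \<open>isperm a\<close>])
  have iy: "ev f g (inv_word (word y)) = perm5 (linv b)" by (rule val_inv[OF g y \<open>isperm b\<close>])
  have va: "valid a" "valid (linv a)" "valid b" "valid (linv b)" using assms by (auto simp: isperm_def)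
  show ?thesis unfolding val_def
  proof
    fix z
    show "ev f g (word (Comm x y)) z = perm5 (lcomm a b) z"
      using x y ix iy va by (simp add: val_def ev_append lcomm_def perm5_lmul valid_lmul)
  qed
qed

lemma val_add: assumes x: "val f g x a" and y: "val f g y b" and "valid b"
  shows "val f g (Add x y) (lmul a b)"
  unfolding val_def
proof
  fix z
  show "ev f g (word (Add x y)) z = perm5 (lmul a b) z"
    using x y assms(3) by (simp add: val_def ev_append perm5_lmul)
qed

lemma val_eq: "val f g e a \<Longrightarrow> a = b \<Longrightarrow> val f g e b" by simp

section \<open>Conjugation of assignments\<close>

definition cf :: "nat list \<Rightarrow> ('a \<Rightarrow> nat \<Rightarrow> nat) \<Rightarrow> 'a \<Rightarrow> nat \<Rightarrow> nat" where
  "cf h f = (\<lambda>x. perm5 h \<circ> f x \<circ> perm5 (linv h))"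

lemma good_cf: "isperm h \<Longrightarrow> good f g \<Longrightarrow> good (cf h f) (cf h g)"
  by (simp add: good_def cf_def isperm_inv1 isperm_inv2)

lemma ev_cf: assumes "isperm h" "good f g"
  shows "ev (cf h f) (cf h g) w z = perm5 h (ev f g w (perm5 (linv h) z))"
proof (induction w arbitrary: z)
  case Nil then show ?case using isperm_inv1[OF assms(1)] by simp
next
  case (Cons l w)
  have lv: "lval (cf h f) (cf h g) l y = perm5 h (lval f g l (perm5 (linv h) y))" for y
    by (cases l) (simp add: cf_def)
  show ?case by (simp add: lv Cons.IH isperm_inv2[OF assms(1)])
qed

lemma val_cf: assumes "isperm h" "good f g" "valid a" "val f g e a"
  shows "val (cf h f) (cf h g) e (lconj h a)"
  unfolding val_def
proof
  fix z
  show "ev (cf h f) (cf h g) (word e) z = perm5 (lconj h a) z"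
  proof -
    have v: "valid (linv h)" "valid a" using isperm_valid_inv[OF assms(1)] assms(3) by auto
    have "ev (cf h f) (cf h g) (word e) z = perm5 h (ev f g (word e) (perm5 (linv h) z))"
      by (rule ev_cf[OF assms(1,2)])
    also have "\<dots> = perm5 h (perm5 a (perm5 (linv h) z))" using assms(4) by (simp add: val_def)
    also have "\<dots> = perm5 (lconj h a) z" using v by (simp add: lconj_def perm5_lmul)
    finally show ?thesis .
  qed
qed

lemma cf_id: "isperm h \<Longrightarrow> f s = id \<Longrightarrow> cf h f s = id"
  by (simp add: cf_def fun_eq_iff isperm_inv1)

definition mix :: "'a set \<Rightarrow> ('a \<Rightarrow> nat \<Rightarrow> nat) \<Rightarrow> ('a \<Rightarrow> nat \<Rightarrow> nat) \<Rightarrow> 'a \<Rightarrow> nat \<Rightarrow> nat" where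
  "mix A f1 f2 = (\<lambda>x. if x \<in> A then f1 x else f2 x)"

lemma good_mix: "good f1 g1 \<Longrightarrow> good f2 g2 \<Longrightarrow> good (mix A f1 f2) (mix A g1 g2)"
  by (simp add: good_def mix_def)

lemma val_mix1: "fst ` set (word e) \<subseteq> A \<Longrightarrow> val f1 g1 e a \<Longrightarrow> val (mix A f1 f2) (mix A g1 g2) e a"
  unfolding val_def by (subst ev_cong[where f'=f1 and g'=g1]) (auto simp: mix_def)
lemma val_mix2: "fst ` set (word e) \<inter> A = {} \<Longrightarrow> val f2 g2 e a \<Longrightarrow> val (mix A f1 f2) (mix A g1 g2) e a"
  unfolding val_def by (subst ev_cong[where f'=f2 and g'=g2]) (auto simp: mix_def)

definition perms6 :: "'b \<times> 'b \<times> 'b \<Rightarrow> ('b \<times> 'b \<times> 'b) list" where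
  "perms6 t = (case t of (a, b, c) \<Rightarrow> [(a,b,c),(a,c,b),(b,a,c),(b,c,a),(c,a,b),(c,b,a)])"
definition pick :: "nat \<Rightarrow> 'b \<times> 'b \<times> 'b \<Rightarrow> 'b \<times> 'b \<times> 'b" where
  "pick s t = perms6 t ! s"

lemma mset2: "mset [Y, Z] = mset [Q, C] \<Longrightarrow> (Y = Q \<and> Z = C) \<or> (Y = C \<and> Z = Q)"
  by (auto simp: add_eq_conv_ex)

lemma mset3: assumes "mset [X, Y, Z] = mset [P, Q, C]"
  shows "\<exists>s<6. (X, Y, Z) = pick s (P, Q, C)"
proof -
  have "X \<in># mset [X, Y, Z]" by simp
  then have "X \<in># mset [P, Q, C]" by (simp only: assms)
  then have "X = P \<or> X = Q \<or> X = C" by simp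
  then have "(X, Y, Z) \<in> set (perms6 (P, Q, C))"
  proof (elim disjE)
    assume 1: "X = P"
    then have "mset [Y, Z] = mset [Q, C]" using assms by simp
    then have "(Y = Q \<and> Z = C) \<or> (Y = C \<and> Z = Q)" by (rule mset2)
    then show ?thesis using 1 by (elim disjE) (simp_all add: perms6_def)
  next
    assume 2: "X = Q"
    have "mset [P, Q, C] = mset [Q, P, C]" by (simp add: add_mset_commute[of P Q])
    then have "mset [Y, Z] = mset [P, C]" using assms 2 by (metis add_mset_commute add_mset_remove_trivial mset.simps(2))
    then have "(Y = P \<and> Z = C) \<or> (Y = C \<and> Z = P)" by (rule mset2)
    then show ?thesis using 2 by (elim disjE) (simp_all add: perms6_def)
  next
    assume 3: "X = C"
    have "mset [P, Q, C] = mset [C, P, Q]"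
      by (simp add: add_mset_commute[of Q C "{#}"] add_mset_commute[of P C])
    then have "mset [Y, Z] = mset [P, Q]" using assms 3 by (metis add_mset_commute add_mset_remove_trivial mset.simps(2))
    then have "(Y = P \<and> Z = Q) \<or> (Y = Q \<and> Z = P)" by (rule mset2)
    then show ?thesis using 3 by (elim disjE) (simp_all add: perms6_def)
  qed
  then obtain s where s: "s < length (perms6 (P, Q, C))" and e: "(X, Y, Z) = perms6 (P, Q, C) ! s"
    unfolding in_set_conv_nth by auto
  have "length (perms6 (P, Q, C)) = 6" by (simp add: perms6_def)
  then show ?thesis using s e unfolding pick_def by auto
qed

lemma six: "s < (6::nat) \<Longrightarrow> s = 0 \<or> s = 1 \<or> s = 2 \<or> s = 3 \<or> s = 4 \<or> s = 5" by auto

definition ok3 :: "nat \<Rightarrow> nat list \<Rightarrow> nat list \<Rightarrow> nat list \<Rightarrow> nat list \<Rightarrow> bool" where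
  "ok3 s p q c t = (case pick s (p, q, c) of (x, y, z) \<Rightarrow>
     isperm x \<and> isperm y \<and> isperm z \<and> isperm (lcomm y z) \<and> lcomm x (lcomm y z) = t)"

lemma comb: assumes g: "good f g" and "val f g P p" "val f g Q q" "val f g C c" "s < 6"
  "(X, Y, Z) = pick s (P, Q, C)" "ok3 s p q c t"
  shows "val f g (Comm X (Comm Y Z)) t"
proof -
  obtain x y z where xyz: "pick s (p, q, c) = (x, y, z)" by (cases "pick s (p, q, c)") auto
  have v: "val f g X x \<and> val f g Y y \<and> val f g Z z"
    using six[OF assms(5)] xyz assms(2-4,6) by (elim disjE) (simp_all add: pick_def perms6_def)
  have o: "isperm x" "isperm y" "isperm z" "isperm (lcomm y z)" "lcomm x (lcomm y z) = t"
    using assms(7) xyz by (auto simp: ok3_def)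
  have "val f g (Comm Y Z) (lcomm y z)" using val_comm[OF g] v o by blast
  then have "val f g (Comm X (Comm Y Z)) (lcomm x (lcomm y z))" using val_comm[OF g] v o by blast
  then show ?thesis using o by simp
qed

definition "fw = [0,2,1,4,3::nat]"
definition "fb = [1,3,0,4,2::nat]"
definition "kr = [0,1,3,4,2::nat]"
definition "xa = [1,3,2,0,4::nat]"
definition "xb = [3,2,0,4,1::nat]"
definition "idl = [0,1,2,3,4::nat]"
definition wF :: "(nat list \<times> nat list) list" where
 "wF = [([0,2,3,1,4],[4,2,0,1,3]), ([0,3,1,2,4],[1,2,4,0,3]), ([3,1,0,2,4],[0,4,2,1,3]),
        ([1,0,2,4,3],[0,1,3,4,2]), ([2,1,3,0,4],[1,4,0,2,3]), ([1,2,3,4,0],[3,2,1,0,4])]"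
definition wK0 :: "(nat list \<times> nat list) list" where
 "wK0 = [([1,2,0,3,4],[0,1,3,4,2]), ([1,2,0,3,4],[0,3,1,2,4]), ([0,2,1,4,3],[2,3,4,0,1]),
         ([0,2,1,4,3],[3,0,1,4,2]), ([1,2,0,3,4],[0,4,2,1,3]), ([0,2,1,4,3],[1,3,4,2,0])]"
definition wK1 :: "(nat list \<times> nat list) list" where
 "wK1 = [([0,2,1,4,3],[2,3,4,0,1]), ([0,2,1,4,3],[3,0,1,4,2]), ([1,2,0,3,4],[0,1,3,4,2]),
         ([1,2,0,3,4],[0,3,1,2,4]), ([0,2,1,4,3],[1,3,4,2,0]), ([1,2,0,3,4],[0,4,2,1,3])]"

lemmas data_defs = fw_def fb_def kr_def xa_def xb_def idl_def

lemma conc_basic: "isperm fw" "isperm fb" "isperm kr" "isperm xa" "isperm xb" "isperm idl"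
  "lmul xa xb = fw" "lcomm xa xb = fb" "lmul idl kr = kr" "lmul kr idl = kr"
  by code_simp+

lemma checkF: assumes "s < 6"
  shows "isperm (fst (wF ! s)) \<and> isperm (snd (wF ! s)) \<and>
    isperm (lconj (fst (wF ! s)) fb) \<and> isperm (lconj (snd (wF ! s)) fb) \<and>
    lcomm (lconj (fst (wF ! s)) fb) (lconj (snd (wF ! s)) fb) = fb \<and>
    ok3 s (lconj (fst (wF ! s)) fw) (lconj (snd (wF ! s)) fw)
      (lmul (lconj (fst (wF ! s)) fb) (lconj (snd (wF ! s)) fb)) fw"
  using six[OF assms]
  by (elim disjE; hypsubst; code_simp)

lemma checkK0: assumes "s < 6"
  shows "isperm (fst (wK0 ! s)) \<and> isperm (snd (wK0 ! s)) \<and>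
    isperm (lconj (snd (wK0 ! s)) fb) \<and>
    ok3 s (lconj (fst (wK0 ! s)) kr) (lconj (snd (wK0 ! s)) fw)
      (lmul idl (lconj (snd (wK0 ! s)) fb)) kr"
  using six[OF assms]
  by (elim disjE; hypsubst; code_simp)

lemma checkK1: assumes "s < 6"
  shows "isperm (fst (wK1 ! s)) \<and> isperm (snd (wK1 ! s)) \<and>
    isperm (lconj (snd (wK1 ! s)) fb) \<and>
    ok3 s (lconj (snd (wK1 ! s)) fw) (lconj (fst (wK1 ! s)) kr)
      (lmul (lconj (snd (wK1 ! s)) fb) idl) kr"
  using six[OF assms]
  by (elim disjE; hypsubst; code_simp)

lemma btree_1: "btree [a] = Gen a"
  by (subst btree.simps) simp
lemma btree_2: "btree [a, b] = Comm (Gen a) (Gen b)"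
  by (subst btree.simps) (simp add: btree_1)
lemma btree_step: "length U \<ge> 2 \<Longrightarrow>
  btree U = Comm (btree (take (length U div 2) U)) (btree (drop (length U div 2) U))"
  by (subst btree.simps) simp

lemma nails_inv[simp]: "fst ` set (inv_word w) = fst ` set w"
  by (force simp: inv_word_def)

lemma nails_comm: "fst ` set (word (Comm x y)) = fst ` set (word x) \<union> fst ` set (word y)"
  by (simp add: image_Un Un_ac)

lemma nails_add: "fst ` set (word (Add x y)) = fst ` set (word x) \<union> fst ` set (word y)"
  by auto

lemma nails_btree: "U \<noteq> [] \<Longrightarrow> fst ` set (word (btree U)) \<subseteq> set U"
proof (induction U rule: btree.induct)
  case (1 U)
  show ?case
  proof (cases "length U \<le> 1")
    case True
    then obtain a where "U = [a]" using 1(3) by (cases U) auto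
    then show ?thesis by (simp add: btree_1)
  next
    case False
    then have l: "length U \<ge> 2" by simp
    define L where "L = take (length U div 2) U"
    define R where "R = drop (length U div 2) U"
    have t: "L \<noteq> []" unfolding L_def using l by (cases U) auto
    have d: "R \<noteq> []" unfolding R_def using l by (cases U) auto
    have "fst ` set (word (btree L)) \<subseteq> set L"
      using 1(1)[OF False] t unfolding L_def by blast
    moreover have "set L \<subseteq> set U" unfolding L_def by (rule set_take_subset)
    moreover have "fst ` set (word (btree R)) \<subseteq> set R"
      using 1(2)[OF False] d unfolding R_def by blast
    moreover have "set R \<subseteq> set U" unfolding R_def by (rule set_drop_subset)
    moreover have "btree U = Comm (btree L) (btree R)" unfolding L_def R_def by (rule btree_step[OF l])
    ultimately show ?thesis by (simp only: nails_comm) blast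
  qed
qed

lemma ev_id_inv: "good f g \<Longrightarrow> ev f g w = id \<Longrightarrow> ev f g (inv_word w) = id"
proof
  fix z assume "good f g" "ev f g w = id"
  then show "ev f g (inv_word w) z = id z" using ev_inv1[of f g w z] by simp
qed

lemma ev_comm_id1: "good f g \<Longrightarrow> ev f g (word x) = id \<Longrightarrow> ev f g (word (Comm x y)) = id"
proof
  fix z assume g: "good f g" and x: "ev f g (word x) = id"
  have ix: "ev f g (inv_word (word x)) = id" by (rule ev_id_inv[OF g x])
  show "ev f g (word (Comm x y)) z = id z"
    using x ix ev_inv2[OF g, of "word y" z] by (simp add: ev_append)
qed

lemma ev_comm_id2: "good f g \<Longrightarrow> ev f g (word y) = id \<Longrightarrow> ev f g (word (Comm x y)) = id"
proof
  fix z assume g: "good f g" and y: "ev f g (word y) = id"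
  have iy: "ev f g (inv_word (word y)) = id" by (rule ev_id_inv[OF g y])
  show "ev f g (word (Comm x y)) z = id z"
    using y iy ev_inv2[OF g, of "word x" z] by (simp add: ev_append)
qed

lemma btree_kill: "good f g \<Longrightarrow> s \<in> set U \<Longrightarrow> f s = id \<Longrightarrow> g s = id \<Longrightarrow> ev f g (word (btree U)) = id"
proof (induction U rule: btree.induct)
  case (1 U)
  show ?case
  proof (cases "length U \<le> 1")
    case True
    then have "U = [s]" using 1(4) by (cases U) auto
    then show ?thesis using 1 by (simp add: btree_1)
  next
    case False
    then have l: "length U \<ge> 2" by simp
    have "s \<in> set (take (length U div 2) U) \<or> s \<in> set (drop (length U div 2) U)"
      using 1(4) by (metis Un_iff append_take_drop_id set_append)
    then show ?thesis
    proof
      assume "s \<in> set (take (length U div 2) U)"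
      then have "ev f g (word (btree (take (length U div 2) U))) = id" by (rule 1(1)[OF False 1(3) _ 1(5,6)])
      then show ?thesis by (subst btree_step[OF l]) (rule ev_comm_id1[OF 1(3)])
    next
      assume "s \<in> set (drop (length U div 2) U)"
      then have "ev f g (word (btree (drop (length U div 2) U))) = id" by (rule 1(2)[OF False 1(3) _ 1(5,6)])
      then show ?thesis by (subst btree_step[OF l]) (rule ev_comm_id2[OF 1(3)])
    qed
  qed
qed

lemma isW_props: "isW U e \<Longrightarrow> fst ` set (word e) \<subseteq> set U \<and> length U \<ge> 2"
proof (induction rule: isW.induct)
  case (base a b) then show ?case by auto
next
  case (step U L R P Q C X Y Z)
  have LU: "set L \<subseteq> set U" using \<open>L = take (length U div 2) U\<close> by (simp add: set_take_subset)
  have RU: "set R \<subseteq> set U" using \<open>R = drop (length U div 2) U\<close> by (simp add: set_drop_subset)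
  have Ln: "L \<noteq> []" and Rn: "R \<noteq> []" using step.IH by auto
  have nP: "fst ` set (word P) \<subseteq> set U" using step.IH LU by blast
  have nQ: "fst ` set (word Q) \<subseteq> set U" using step.IH RU by blast
  have nC: "fst ` set (word C) \<subseteq> set U"
    using \<open>C = Add (btree L) (btree R)\<close> nails_btree[OF Ln] nails_btree[OF Rn] LU RU
    by (simp only: nails_add) blast
  have "set [X, Y, Z] = set [P, Q, C]" by (metis \<open>mset [X, Y, Z] = mset [P, Q, C]\<close> set_mset_mset)
  then have "X \<in> {P, Q, C}" "Y \<in> {P, Q, C}" "Z \<in> {P, Q, C}" by auto
  then have "fst ` set (word X) \<subseteq> set U" "fst ` set (word Y) \<subseteq> set U" "fst ` set (word Z) \<subseteq> set U"
    using nP nQ nC by auto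
  then show ?case using \<open>length U \<ge> 4\<close> by (simp only: nails_comm) auto
qed

lemma distinct_split: "distinct U \<Longrightarrow> L = take n U \<Longrightarrow> R = drop n U \<Longrightarrow>
  distinct L \<and> distinct R \<and> set L \<inter> set R = {}"
  by (metis append_take_drop_id distinct_append)

lemma invF: "isW U e \<Longrightarrow> distinct U \<Longrightarrow> \<exists>f g. good f g \<and> val f g e fw \<and> val f g (btree U) fb"
proof (induction rule: isW.induct)
  case (base a b)
  have ab: "a \<noteq> b" using base by simp
  define f where "f = (\<lambda>x. if x = a then perm5 xa else perm5 xb)"
  define g where "g = (\<lambda>x. if x = a then perm5 (linv xa) else perm5 (linv xb))"
  have pa: "isperm xa" "isperm xb" using conc_basic by auto
  have gd: "good f g" using pa by (simp add: good_def f_def g_def isperm_inv1 isperm_inv2)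
  have va: "val f g (Gen a) xa" by (simp add: val_def f_def)
  have vb: "val f g (Gen b) xb" using ab by (simp add: val_def f_def)
  have "val f g (Add (Gen a) (Gen b)) fw" using val_add[OF va vb isperm_valid[OF pa(2)]] conc_basic by simp
  moreover have "val f g (btree [a, b]) fb" using val_comm[OF gd va vb pa] conc_basic by (simp add: btree_2)
  ultimately show ?case using gd by blast
next
  case (step U L R P Q C X Y Z)
  have dLR: "distinct L" "distinct R" "set L \<inter> set R = {}"
    using distinct_split[OF step.prems \<open>L = take (length U div 2) U\<close> \<open>R = drop (length U div 2) U\<close>] by auto
  obtain f1 g1 where F1: "good f1 g1" "val f1 g1 P fw" "val f1 g1 (btree L) fb" using step.IH(1) dLR by blast
  obtain f2 g2 where F2: "good f2 g2" "val f2 g2 Q fw" "val f2 g2 (btree R) fb" using step.IH(2) dLR by blast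
  obtain s where s: "s < 6" "(X, Y, Z) = pick s (P, Q, C)" using mset3[OF \<open>mset [X, Y, Z] = mset [P, Q, C]\<close>] by blast
  define h1 where "h1 = fst (wF ! s)"
  define h2 where "h2 = snd (wF ! s)"
  have ch: "isperm h1" "isperm h2" "isperm (lconj h1 fb)" "isperm (lconj h2 fb)"
    "lcomm (lconj h1 fb) (lconj h2 fb) = fb"
    "ok3 s (lconj h1 fw) (lconj h2 fw) (lmul (lconj h1 fb) (lconj h2 fb)) fw"
    using checkF[OF s(1)] unfolding h1_def h2_def by auto
  define f where "f = mix (set L) (cf h1 f1) (cf h2 f2)"
  define g where "g = mix (set L) (cf h1 g1) (cf h2 g2)"
  have gd: "good f g" unfolding f_def g_def by (rule good_mix[OF good_cf[OF ch(1) F1(1)] good_cf[OF ch(2) F2(1)]])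
  have pL: "fst ` set (word P) \<subseteq> set L" "length L \<ge> 2" using isW_props[OF \<open>isW L P\<close>] by auto
  have pR: "fst ` set (word Q) \<subseteq> set R" "length R \<ge> 2" using isW_props[OF \<open>isW R Q\<close>] by auto
  have Ln: "L \<noteq> []" and Rn: "R \<noteq> []" using pL pR by auto
  have nQ: "fst ` set (word Q) \<inter> set L = {}" using pR dLR(3) by blast
  have nBL: "fst ` set (word (btree L)) \<subseteq> set L" by (rule nails_btree[OF Ln])
  have nBR: "fst ` set (word (btree R)) \<inter> set L = {}" using nails_btree[OF Rn] dLR(3) by blast
  have vfw: "valid fw" "valid fb" using conc_basic isperm_valid by auto
  have vP: "val f g P (lconj h1 fw)" unfolding f_def g_def
    by (rule val_mix1[OF pL(1) val_cf[OF ch(1) F1(1) vfw(1) F1(2)]])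
  have vBL: "val f g (btree L) (lconj h1 fb)" unfolding f_def g_def
    by (rule val_mix1[OF nBL val_cf[OF ch(1) F1(1) vfw(2) F1(3)]])
  have vQ: "val f g Q (lconj h2 fw)" unfolding f_def g_def
    by (rule val_mix2[OF nQ val_cf[OF ch(2) F2(1) vfw(1) F2(2)]])
  have vBR: "val f g (btree R) (lconj h2 fb)" unfolding f_def g_def
    by (rule val_mix2[OF nBR val_cf[OF ch(2) F2(1) vfw(2) F2(3)]])
  have vC: "val f g C (lmul (lconj h1 fb) (lconj h2 fb))"
    using val_add[OF vBL vBR isperm_valid[OF ch(4)]] \<open>C = Add (btree L) (btree R)\<close> by simp
  have "val f g (Comm X (Comm Y Z)) fw" by (rule comb[OF gd vP vQ vC s ch(6)])
  moreover have "val f g (btree U) fb"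
  proof -
    have "btree U = Comm (btree L) (btree R)"
      using btree_step[of U] \<open>length U \<ge> 4\<close> \<open>L = take (length U div 2) U\<close> \<open>R = drop (length U div 2) U\<close> by simp
    then show ?thesis using val_comm[OF gd vBL vBR ch(3,4)] ch(5) by simp
  qed
  ultimately show ?case using gd by blast
qed

lemma val_idl: "ev f g (word e) = id \<Longrightarrow> val f g e idl"
  by (simp add: val_def idl_def fun_eq_iff perm5_id)

lemma invK: "isW U e \<Longrightarrow> distinct U \<Longrightarrow> s \<in> set U \<Longrightarrow>
  \<exists>f g. good f g \<and> f s = id \<and> g s = id \<and> val f g e kr"
proof (induction arbitrary: s rule: isW.induct)
  case (base a b)
  have ab: "a \<noteq> b" using base by simp
  have pk: "isperm kr" using conc_basic by auto
  show ?case
  proof (cases "s = a")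
    case True
    define f where "f = (\<lambda>x. if x = a then id else perm5 kr)"
    define g where "g = (\<lambda>x. if x = a then id else perm5 (linv kr))"
    have gd: "good f g" using pk by (simp add: good_def f_def g_def isperm_inv1 isperm_inv2)
    have va: "val f g (Gen a) idl" by (rule val_idl) (simp add: f_def)
    have vb: "val f g (Gen b) kr" using ab by (simp add: val_def f_def)
    have "val f g (Add (Gen a) (Gen b)) kr" using val_add[OF va vb isperm_valid[OF pk]] conc_basic by simp
    moreover have "f s = id" "g s = id" using True by (simp_all add: f_def g_def)
    ultimately show ?thesis using gd by blast
  next
    case False
    then have sb: "s = b" using base by simp
    define f where "f = (\<lambda>x. if x = b then id else perm5 kr)"
    define g where "g = (\<lambda>x. if x = b then id else perm5 (linv kr))"
    have gd: "good f g" using pk by (simp add: good_def f_def g_def isperm_inv1 isperm_inv2)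
    have va: "val f g (Gen a) kr" using ab by (simp add: val_def f_def)
    have vb: "val f g (Gen b) idl" by (rule val_idl) (simp add: f_def)
    have "val f g (Add (Gen a) (Gen b)) kr" using val_add[OF va vb] conc_basic isperm_valid by simp
    moreover have "f s = id" "g s = id" using sb by (simp_all add: f_def g_def)
    ultimately show ?thesis using gd by blast
  qed
next
  case (step U L R P Q C X Y Z)
  have dLR: "distinct L" "distinct R" "set L \<inter> set R = {}"
    using distinct_split[OF step.prems(1) \<open>L = take (length U div 2) U\<close> \<open>R = drop (length U div 2) U\<close>] by auto
  have ULR: "set U = set L \<union> set R"
    using \<open>L = take (length U div 2) U\<close> \<open>R = drop (length U div 2) U\<close>
    by (metis append_take_drop_id set_append)
  obtain s' where s: "s' < 6" "(X, Y, Z) = pick s' (P, Q, C)" using mset3[OF \<open>mset [X, Y, Z] = mset [P, Q, C]\<close>] by blast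
  have pL: "fst ` set (word P) \<subseteq> set L" "length L \<ge> 2" using isW_props[OF \<open>isW L P\<close>] by auto
  have pR: "fst ` set (word Q) \<subseteq> set R" "length R \<ge> 2" using isW_props[OF \<open>isW R Q\<close>] by auto
  have Ln: "L \<noteq> []" and Rn: "R \<noteq> []" using pL pR by auto
  have nQ: "fst ` set (word Q) \<inter> set L = {}" using pR dLR(3) by blast
  have nBL: "fst ` set (word (btree L)) \<subseteq> set L" by (rule nails_btree[OF Ln])
  have nBR: "fst ` set (word (btree R)) \<inter> set L = {}" using nails_btree[OF Rn] dLR(3) by blast
  have vfw: "valid fw" "valid fb" "valid kr" "valid idl" using conc_basic isperm_valid by auto
  have bU: "btree U = Comm (btree L) (btree R)"
    using btree_step[of U] \<open>length U \<ge> 4\<close> \<open>L = take (length U div 2) U\<close> \<open>R = drop (length U div 2) U\<close> by simp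
  have "s \<in> set L \<or> s \<in> set R" using step.prems(2) ULR by auto
  then show ?case
  proof
    assume sL: "s \<in> set L"
    obtain f1 g1 where F1: "good f1 g1" "f1 s = id" "g1 s = id" "val f1 g1 P kr"
      using step.IH(1)[OF dLR(1) sL] by blast
    obtain f2 g2 where F2: "good f2 g2" "val f2 g2 Q fw" "val f2 g2 (btree R) fb"
      using invF[OF \<open>isW R Q\<close> dLR(2)] by blast
    define h1 where "h1 = fst (wK0 ! s')"
    define h2 where "h2 = snd (wK0 ! s')"
    have ch: "isperm h1" "isperm h2" "isperm (lconj h2 fb)"
      "ok3 s' (lconj h1 kr) (lconj h2 fw) (lmul idl (lconj h2 fb)) kr"
      using checkK0[OF s(1)] unfolding h1_def h2_def by auto
    define f where "f = mix (set L) (cf h1 f1) (cf h2 f2)"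
    define g where "g = mix (set L) (cf h1 g1) (cf h2 g2)"
    have gd: "good f g" unfolding f_def g_def by (rule good_mix[OF good_cf[OF ch(1) F1(1)] good_cf[OF ch(2) F2(1)]])
    have fs: "f s = id" "g s = id" using sL cf_id[OF ch(1)] F1(2,3) by (auto simp: f_def g_def mix_def)
    have vP: "val f g P (lconj h1 kr)" unfolding f_def g_def
      by (rule val_mix1[OF pL(1) val_cf[OF ch(1) F1(1) vfw(3) F1(4)]])
    have vBL: "val f g (btree L) idl" by (rule val_idl[OF btree_kill[OF gd sL fs]])
    have vQ: "val f g Q (lconj h2 fw)" unfolding f_def g_def
      by (rule val_mix2[OF nQ val_cf[OF ch(2) F2(1) vfw(1) F2(2)]])
    have vBR: "val f g (btree R) (lconj h2 fb)" unfolding f_def g_def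
      by (rule val_mix2[OF nBR val_cf[OF ch(2) F2(1) vfw(2) F2(3)]])
    have vC: "val f g C (lmul idl (lconj h2 fb))"
      using val_add[OF vBL vBR isperm_valid[OF ch(3)]] \<open>C = Add (btree L) (btree R)\<close> by simp
    have "val f g (Comm X (Comm Y Z)) kr" by (rule comb[OF gd vP vQ vC s ch(4)])
    then show ?thesis using gd fs by blast
  next
    assume sR: "s \<in> set R"
    then have snL: "s \<notin> set L" using dLR(3) by blast
    obtain f1 g1 where F1: "good f1 g1" "f1 s = id" "g1 s = id" "val f1 g1 Q kr"
      using step.IH(2)[OF dLR(2) sR] by blast
    obtain f2 g2 where F2: "good f2 g2" "val f2 g2 P fw" "val f2 g2 (btree L) fb"
      using invF[OF \<open>isW L P\<close> dLR(1)] by blast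
    define h1 where "h1 = fst (wK1 ! s')"
    define h2 where "h2 = snd (wK1 ! s')"
    have ch: "isperm h1" "isperm h2" "isperm (lconj h2 fb)"
      "ok3 s' (lconj h2 fw) (lconj h1 kr) (lmul (lconj h2 fb) idl) kr"
      using checkK1[OF s(1)] unfolding h1_def h2_def by auto
    define f where "f = mix (set L) (cf h2 f2) (cf h1 f1)"
    define g where "g = mix (set L) (cf h2 g2) (cf h1 g1)"
    have gd: "good f g" unfolding f_def g_def by (rule good_mix[OF good_cf[OF ch(2) F2(1)] good_cf[OF ch(1) F1(1)]])
    have fs: "f s = id" "g s = id" using snL cf_id[OF ch(1)] F1(2,3) by (auto simp: f_def g_def mix_def)
    have vP: "val f g P (lconj h2 fw)" unfolding f_def g_def
      by (rule val_mix1[OF pL(1) val_cf[OF ch(2) F2(1) vfw(1) F2(2)]])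
    have vBL: "val f g (btree L) (lconj h2 fb)" unfolding f_def g_def
      by (rule val_mix1[OF nBL val_cf[OF ch(2) F2(1) vfw(2) F2(3)]])
    have vQ: "val f g Q (lconj h1 kr)" unfolding f_def g_def
      by (rule val_mix2[OF nQ val_cf[OF ch(1) F1(1) vfw(3) F1(4)]])
    have vBR: "val f g (btree R) idl" by (rule val_idl[OF btree_kill[OF gd sR fs]])
    have vC: "val f g C (lmul (lconj h2 fb) idl)"
      using val_add[OF vBL vBR vfw(4)] \<open>C = Add (btree L) (btree R)\<close> by simp
    have "val f g (Comm X (Comm Y Z)) kr" by (rule comb[OF gd vP vQ vC s ch(4)])
    then show ?thesis using gd fs by blast
  qed
qed

lemma triv_gen: "s \<in> S \<Longrightarrow> triv S (Gen s)"
  by (simp add: triv_def kill_def)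

lemma triv_btree: "s \<in> S \<Longrightarrow> s \<in> set U \<Longrightarrow> triv S (btree U)"
proof (induction U rule: btree.induct)
  case (1 U)
  show ?case
  proof (cases "length U \<le> 1")
    case True
    then have "U = [s]" using 1(4) by (cases U) auto
    then show ?thesis using 1(3) by (simp add: btree_1 triv_gen)
  next
    case False
    then have l: "length U \<ge> 2" by simp
    have "s \<in> set (take (length U div 2) U) \<or> s \<in> set (drop (length U div 2) U)"
      using 1(4) by (metis Un_iff append_take_drop_id set_append)
    then show ?thesis
    proof
      assume "s \<in> set (take (length U div 2) U)"
      then have "triv S (btree (take (length U div 2) U))" by (rule 1(1)[OF False 1(3)])
      then show ?thesis by (subst btree_step[OF l]) (rule triv_comm1)
    next
      assume "s \<in> set (drop (length U div 2) U)"
      then have "triv S (btree (drop (length U div 2) U))" by (rule 1(2)[OF False 1(3)])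
      then show ?thesis by (subst btree_step[OF l]) (rule triv_comm2)
    qed
  qed
qed

lemma triv_pick: assumes "s < 6" "(X, Y, Z) = pick s (P, Q, C)" "triv S P \<or> triv S Q \<or> triv S C"
  shows "triv S (Comm X (Comm Y Z))"
proof -
  have "triv S X \<or> triv S Y \<or> triv S Z"
    using six[OF assms(1)] assms(2,3) by (elim disjE) (simp_all add: pick_def perms6_def)
  then show ?thesis by (metis triv_comm1 triv_comm2)
qed

lemma triv_W: "isW U e \<Longrightarrow> a \<in> S \<Longrightarrow> b \<in> S \<Longrightarrow> a \<noteq> b \<Longrightarrow> a \<in> set U \<Longrightarrow> b \<in> set U \<Longrightarrow> triv S e"
proof (induction arbitrary: a b rule: isW.induct)
  case (base x y)
  then have "x \<in> S" "y \<in> S" by auto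
  then show ?case by (simp add: triv_def kill_def)
next
  case (step U L R P Q C X Y Z)
  have ULR: "set U = set L \<union> set R"
    using \<open>L = take (length U div 2) U\<close> \<open>R = drop (length U div 2) U\<close>
    by (metis append_take_drop_id set_append)
  obtain s where s: "s < 6" "(X, Y, Z) = pick s (P, Q, C)" using mset3[OF \<open>mset [X, Y, Z] = mset [P, Q, C]\<close>] by blast
  have "triv S P \<or> triv S Q \<or> triv S C"
  proof (cases "a \<in> set L")
    case aL: True
    show ?thesis
    proof (cases "b \<in> set L")
      case True then show ?thesis using step.IH(1)[OF step.prems(1-3) aL] by blast
    next
      case False
      then have bR: "b \<in> set R" using step.prems ULR by auto
      have "triv S (btree L)" by (rule triv_btree[OF step.prems(1) aL])
      moreover have "triv S (btree R)" by (rule triv_btree[OF step.prems(2) bR])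
      ultimately have "triv S (btree L)" "triv S (btree R)" by auto
      then show ?thesis using \<open>C = Add (btree L) (btree R)\<close> triv_add by blast
    qed
  next
    case aR': False
    then have aR: "a \<in> set R" using step.prems ULR by auto
    show ?thesis
    proof (cases "b \<in> set R")
      case True then show ?thesis using step.IH(2)[OF step.prems(1-3) aR] by blast
    next
      case False
      then have bL: "b \<in> set L" using step.prems ULR by auto
      have "triv S (btree R)" by (rule triv_btree[OF step.prems(1) aR])
      moreover have "triv S (btree L)" by (rule triv_btree[OF step.prems(2) bL])
      ultimately have "triv S (btree L)" "triv S (btree R)" by auto
      then show ?thesis using \<open>C = Add (btree L) (btree R)\<close> triv_add by blast
    qed
  qed
  then show ?case by (rule triv_pick[OF s])
qed

lemma btree_len: "length U = 2 ^ t \<Longrightarrow> flen (btree U) = 4 ^ t"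
proof (induction t arbitrary: U)
  case 0
  then obtain a where "U = [a]" by (cases U) auto
  then show ?case by (simp add: btree_1)
next
  case (Suc m)
  have l: "length U \<ge> 2" using Suc.prems by simp
  have d: "length U div 2 = 2 ^ m" using Suc.prems by simp
  have "flen (btree (take (length U div 2) U)) = 4 ^ m" using Suc.IH[of "take (length U div 2) U"] d Suc.prems by simp
  moreover have "flen (btree (drop (length U div 2) U)) = 4 ^ m" using Suc.IH[of "drop (length U div 2) U"] d Suc.prems by simp
  ultimately show ?case by (subst btree_step[OF l]) simp
qed

lemma exW: "length U = 2 ^ t \<Longrightarrow> t \<ge> 1 \<Longrightarrow> \<exists>e. isW U e"
proof (induction t arbitrary: U)
  case 0 then show ?case by simp
next
  case (Suc m)
  show ?case
  proof (cases "m = 0")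
    case True
    then have "length U = 2" using Suc.prems by simp
    then obtain a b where "U = [a, b]" by (metis length_0_conv length_Suc_conv numeral_2_eq_2)
    then show ?thesis by (auto intro: isW.base)
  next
    case False
    define L where "L = take (length U div 2) U"
    define R where "R = drop (length U div 2) U"
    have d: "length U div 2 = 2 ^ m" using Suc.prems by simp
    have "length L = 2 ^ m" "length R = 2 ^ m" using d Suc.prems by (simp_all add: L_def R_def)
    then obtain P Q where P: "isW L P" and Q: "isW R Q" using Suc.IH False by (meson less_one not_le)
    define C where "C = Add (btree L) (btree R)"
    have l4: "length U \<ge> 4"
    proof -
      have "2 ^ 2 \<le> (2::nat) ^ Suc m" using False by (intro power_increasing) auto
      then show ?thesis using Suc.prems by simp
    qed
    show ?thesis
    proof (cases "flen Q \<le> flen P \<and> flen C \<le> flen P")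
      case True
      have "isW U (Comm P (Comm Q C))"
        by (rule isW.step[OF l4 L_def R_def P Q C_def]) (use True in auto)
      then show ?thesis by blast
    next
      case F1: False
      show ?thesis
      proof (cases "flen P \<le> flen Q \<and> flen C \<le> flen Q")
        case True
        have "isW U (Comm Q (Comm P C))"
          by (rule isW.step[OF l4 L_def R_def P Q C_def]) (use True in \<open>auto simp: add_mset_commute\<close>)
        then show ?thesis by blast
      next
        case False
        have "isW U (Comm C (Comm P Q))"
          by (rule isW.step[OF l4 L_def R_def P Q C_def]) (use False F1 in \<open>auto simp: add_mset_commute\<close>)
        then show ?thesis by blast
      qed
    qed
  qed
qed

lemma flen_pick: assumes "s < 6" "(X, Y, Z) = pick s (P, Q, C)"
  "flen P \<le> flen X" "flen Q \<le> flen X" "flen C \<le> flen X"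
  shows "flen (Comm X (Comm Y Z)) + 2 * flen X = 4 * (flen P + flen Q + flen C)"
    and "flen X = flen P \<or> flen X = flen Q \<or> flen X = flen C"
  using six[OF assms(1)] assms(2-5) by (elim disjE; simp add: pick_def perms6_def)+

lemma pow_ineq: "m \<ge> 2 \<Longrightarrow> 9 * 4 ^ m \<le> 4 * (6::nat) ^ m"
proof -
  assume "m \<ge> 2"
  then obtain k where k: "m = k + 2" by (metis add.commute le_Suc_ex)
  have "(4::nat) ^ k \<le> 6 ^ k" by (rule power_mono) auto
  then show ?thesis using k by (simp add: power_add)
qed

lemma flen_W: "isW U e \<Longrightarrow> length U = 2 ^ t \<Longrightarrow>
  (t = 1 \<and> flen e = 2) \<or> (t \<ge> 2 \<and> 3 * flen e + 12 * 4 ^ t = 8 * 6 ^ t)"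
proof (induction arbitrary: t rule: isW.induct)
  case (base a b)
  then have "(2::nat) ^ t = 2 ^ 1" by simp
  then have "t = 1" using power_inject_exp[of "2::nat" t 1] by simp
  then show ?case by simp
next
  case (step U L R P Q C X Y Z)
  have t2: "t \<ge> 2"
  proof (rule ccontr)
    assume "\<not> t \<ge> 2"
    then have "(2::nat) ^ t \<le> 2 ^ 1" by (intro power_increasing) auto
    then show False using step.prems \<open>length U \<ge> 4\<close> by simp
  qed
  obtain m where tm: "t = Suc m" using t2 by (cases t) auto
  have m1: "m \<ge> 1" using t2 tm by simp
  have d: "length U div 2 = 2 ^ m" using step.prems tm by simp
  have lL: "length L = 2 ^ m" and lR: "length R = 2 ^ m"
    using d step.prems \<open>L = take (length U div 2) U\<close> \<open>R = drop (length U div 2) U\<close> tm by simp_all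
  have IP: "(m = 1 \<and> flen P = 2) \<or> (m \<ge> 2 \<and> 3 * flen P + 12 * 4 ^ m = 8 * 6 ^ m)" using step.IH(1)[OF lL] .
  have IQ: "(m = 1 \<and> flen Q = 2) \<or> (m \<ge> 2 \<and> 3 * flen Q + 12 * 4 ^ m = 8 * 6 ^ m)" using step.IH(2)[OF lR] .
  have fC: "flen C = 2 * 4 ^ m" using \<open>C = Add (btree L) (btree R)\<close> btree_len[OF lL] btree_len[OF lR] by simp
  obtain s where s: "s < 6" "(X, Y, Z) = pick s (P, Q, C)" using mset3[OF \<open>mset [X, Y, Z] = mset [P, Q, C]\<close>] by blast
  note fp = flen_pick[OF s \<open>flen P \<le> flen X\<close> \<open>flen Q \<le> flen X\<close> \<open>flen C \<le> flen X\<close>]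
  show ?case
  proof (cases "m = 1")
    case True
    then have "flen P = 2" "flen Q = 2" "flen C = 8" using IP IQ fC by auto
    then have "flen X = 8" using fp(2) \<open>flen C \<le> flen X\<close> by auto
    then have "flen (Comm X (Comm Y Z)) = 32" using fp(1) \<open>flen P = 2\<close> \<open>flen Q = 2\<close> \<open>flen C = 8\<close> by simp
    then show ?thesis using True tm by simp
  next
    case False
    then have m2: "m \<ge> 2" using m1 by simp
    then have eP: "3 * flen P + 12 * 4 ^ m = 8 * 6 ^ m" and eQ: "3 * flen Q + 12 * 4 ^ m = 8 * 6 ^ m"
      using IP IQ by auto
    have pi: "9 * 4 ^ m \<le> 4 * (6::nat) ^ m" by (rule pow_ineq[OF m2])
    have "flen C \<le> flen P" using eP pi fC by linarith
    then have "flen X = flen P" using fp(2) eP eQ \<open>flen P \<le> flen X\<close> \<open>flen C \<le> flen X\<close> by auto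
    then have "flen (Comm X (Comm Y Z)) + 2 * flen P = 4 * (flen P + flen P + 2 * 4 ^ m)"
      using fp(1) eP eQ fC by simp
    then have "3 * flen (Comm X (Comm Y Z)) + 12 * 4 ^ t = 8 * 6 ^ t" using eP tm by simp
    then show ?thesis using t2 by simp
  qed
qed

lemma length_word: "length (word e) = flen e"
  by (induction e) auto

lemma powr_eq: "real ((2::nat) ^ i) powr (log 2 6) = 6 ^ i"
proof -
  have "real ((2::nat) ^ i) = 2 powr real i" by (simp add: powr_realpow)
  then have "real ((2::nat) ^ i) powr (log 2 6) = 2 powr (real i * log 2 6)" by (simp add: powr_powr)
  also have "\<dots> = (2 powr (log 2 6)) powr real i" by (subst powr_powr) (simp add: mult.commute)
  also have "\<dots> = 6 powr real i" by simp
  also have "\<dots> = 6 ^ i" by (simp add: powr_realpow)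
  finally show ?thesis .
qed

theorem theorem3:
  fixes V :: "'a list" and i :: nat
  assumes "distinct V" and "length V = 2 ^ i" and "i \<ge> 2"
  shows "(\<exists>e. isW V e) \<and>
    (\<forall>e. isW V e \<longrightarrow>
       solves 2 (set V) (word e) \<and>
       real (flen e) = 8/3 * real (length V) powr (log 2 6) - 4 * real (length V) ^ 2 \<and>
       real (flen e) = 8/3 * 6 ^ i - 4 * 4 ^ i \<and>
       real (length (red (word e))) \<le> 8/3 * real (length V) powr (log 2 6) - 4 * real (length V) ^ 2)"
proof (intro conjI allI impI)
  show "\<exists>e. isW V e" using exW[OF assms(2)] assms(3) by simp
next
  fix e assume W: "isW V e"
  have nat_eq: "3 * flen e + 12 * 4 ^ i = 8 * 6 ^ i" using flen_W[OF W assms(2)] assms(3) by auto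
  then have r: "3 * real (flen e) + 12 * 4 ^ i = 8 * 6 ^ i"
    by (metis (mono_tags, lifting) of_nat_add of_nat_mult of_nat_numeral of_nat_power)
  show f3: "real (flen e) = 8/3 * 6 ^ i - 4 * 4 ^ i" using r by simp
  have p: "real (length V) powr (log 2 6) = 6 ^ i" using powr_eq[of i] assms(2) by simp
  have q: "real (length V) ^ 2 = 4 ^ i"
  proof -
    have "real (length V) ^ 2 = ((2::real) ^ i) ^ 2" using assms(2) by simp
    also have "\<dots> = (2 * 2) ^ i" by (simp add: power2_eq_square flip: power_mult_distrib)
    finally show ?thesis by simp
  qed
  show f1: "real (flen e) = 8/3 * real (length V) powr (log 2 6) - 4 * real (length V) ^ 2"
    using f3 p q by simp
  have "length (red (word e)) \<le> flen e" using length_red[of "word e"] length_word[of e] by simp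
  then show "real (length (red (word e))) \<le> 8/3 * real (length V) powr (log 2 6) - 4 * real (length V) ^ 2"
    using f1 by simp
  show "solves 2 (set V) (word e)"
    unfolding solves_def
  proof (intro allI impI)
    fix S assume SV: "S \<subseteq> set V"
    have fin: "finite S" using SV finite_subset by blast
    show "red (kill S (word e)) = [] \<longleftrightarrow> 2 \<le> card S"
    proof
      assume red0: "red (kill S (word e)) = []"
      show "2 \<le> card S"
      proof (rule ccontr)
        assume "\<not> 2 \<le> card S"
        then have "card S \<le> Suc 0" by simp
        then have one: "\<forall>a\<in>S. \<forall>b\<in>S. a = b" using card_le_Suc0_iff_eq[OF fin] by blast
        have Vne: "V \<noteq> []" using assms(2) by auto
        obtain s where s: "s \<in> set V" "S \<subseteq> {s}"
        proof (cases "S = {}")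
          case True then show ?thesis using that Vne by (metis empty_subsetI list.set_sel(1))
        next
          case False
          then obtain s where "s \<in> S" by blast
          then show ?thesis using that one SV by blast
        qed
        obtain f g where F: "good f g" "f s = id" "g s = id" "val f g e kr"
          using invK[OF W assms(1) s(1)] by blast
        have "ev f g (kill S (word e)) = ev f g (word e)"
          by (rule ev_kill) (use s F in auto)
        moreover have "ev f g (kill S (word e)) = id"
        proof
          fix z show "ev f g (kill S (word e)) z = id z"
            using ev_red[OF F(1), of "kill S (word e)" z] red0 by simp
        qed
        ultimately have "perm5 kr = id" using F(4) by (simp add: val_def)
        then have "perm5 kr 2 = 2" by simp
        then show False by (simp add: perm5_def kr_def)
      qed
    next
      assume "2 \<le> card S"
      then have "\<not> card S \<le> Suc 0" by simp
      then obtain a b where ab: "a \<in> S" "b \<in> S" "a \<noteq> b" using card_le_Suc0_iff_eq[OF fin] by blast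
      have "triv S e" by (rule triv_W[OF W ab]) (use ab SV in auto)
      then show "red (kill S (word e)) = []" by (simp add: triv_def)
    qed
  qed
qed

end
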